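(* Every POP-graph $(G,\prec)$ has an elementary decomposition: there are elementary POP-graphs $(G_1,\prec_1),\dots,(G_n,\prec_n)$ such that $(G,\prec)=(G_n,\prec_n)\circ\cdots\circ(G_1,\prec_1)$.
   Context: A progressive graph is a finite directed acyclic graph (parallel edges allowed) in which every source and every sink has degree one; degree-one vertices are boundary vertices, the others internal. It is elementary if each connected component has at most one internal vertex. An input edge is an edge whose initial vertex is a boundary vertex; an output edge one whose terminal vertex is a boundary vertex. For edges write $e\to e'$ if $e\neq e'$ and there is a directed path whose first edge is $e$ and last edge is $e'$. A planar order on $G$ is a linear order $\prec$ on $E(G)$ such that (P1) $e_1\to e_2$ implies $e_1\prec e_2$; (P2) if $e_1\prec e_2\prec e_3$ and $e_1\to e_3$ then $e_1\to e_2$ or $e_2\to e_3$. A POP-graph is a progressive graph with a planar order; it is elementary if the graph is. Equality of POP-graphs means isomorphism (bijections of vertices and edges preserving incidence, direction and order). Composition: let $(G_1,\prec_1)$, $(G_2,\prec_2)$ be POP-graphs, $G_1$ with output edges $o_1\prec_1\cdots\prec_1 o_n$ and $G_2$ with input edges $i_1\prec_2\cdots\prec_2 i_n$. $G_2\circ G_1$ is obtained from $G_1\sqcup G_2$ by deleting the sinks of $G_1$, the sources of $G_2$ and the edges $o_k,i_k$, and adding for each $k$ a new edge $\overline{e_k}$ from the initial vertex of $o_k$ to the terminal vertex of $i_k$. With $Q_1=\{e\in E(G_1): e\prec_1 o_1\}$, $Q_k=\{e: o_{k-1}\prec_1 e\prec_1 o_k\}$, $P_k=\{e\in E(G_2):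 i_k\prec_2 e\prec_2 i_{k+1}\}$ ($k<n$), $P_n=\{e: i_n\prec_2 e\}$, the order $\prec_2\circ\prec_1$ lists $Q_1,\{\overline{e_1}\},P_1,\dots,Q_n,\{\overline{e_n}\},P_n$ consecutively, each $Q_k$ ordered by $\prec_1$, each $P_k$ by $\prec_2$; $(G_2,\prec_2)\circ(G_1,\prec_1):=(G_2\circ G_1,\prec_2\circ\prec_1)$. *)

theory Defs
  imports Main
begin

record ('v, 'e) pgraph =
  verts :: "'v set"
  edges :: "'e set"
  src   :: "'e \<Rightarrow> 'v"
  tgt   :: "'e \<Rightarrow> 'v"
  ord   :: "('e \<times> 'e) set"

definition indeg :: "('v, 'e, 'x) pgraph_scheme \<Rightarrow> 'v \<Rightarrow> nat" where
  "indeg G v = card {e \<in> edges G. tgt G e = v}"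

definition outdeg :: "('v, 'e, 'x) pgraph_scheme \<Rightarrow> 'v \<Rightarrow> nat" where
  "outdeg G v = card {e \<in> edges G. src G e = v}"

definition deg :: "('v, 'e, 'x) pgraph_scheme \<Rightarrow> 'v \<Rightarrow> nat" where
  "deg G v = indeg G v + outdeg G v"

definition is_source :: "('v, 'e, 'x) pgraph_scheme \<Rightarrow> 'v \<Rightarrow> bool" where
  "is_source G v \<longleftrightarrow> v \<in> verts G \<and> indeg G v = 0"

definition is_sink :: "('v, 'e, 'x) pgraph_scheme \<Rightarrow> 'v \<Rightarrow> bool" where
  "is_sink G v \<longleftrightarrow> v \<in> verts G \<and> outdeg G v = 0"

definition boundary :: "('v, 'e, 'x) pgraph_scheme \<Rightarrow> 'v \<Rightarrow> bool" where
  "boundary G v \<longleftrightarrow> v \<in> verts G \<and> deg G v = 1"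

definition internal :: "('v, 'e, 'x) pgraph_scheme \<Rightarrow> 'v \<Rightarrow> bool" where
  "internal G v \<longleftrightarrow> v \<in> verts G \<and> deg G v \<noteq> 1"

definition progressive :: "('v, 'e, 'x) pgraph_scheme \<Rightarrow> bool" where
  "progressive G \<longleftrightarrow>
     finite (verts G) \<and> finite (edges G) \<and>
     (\<forall>e \<in> edges G. src G e \<in> verts G \<and> tgt G e \<in> verts G) \<and>
     acyclic {(src G e, tgt G e) | e. e \<in> edges G} \<and>
     (\<forall>v. is_source G v \<longrightarrow> deg G v = 1) \<and>
     (\<forall>v. is_sink G v \<longrightarrow> deg G v = 1)"

definition input_edges :: "('v, 'e, 'x) pgraph_scheme \<Rightarrow> 'e set" where
  "input_edges G = {e \<in> edges G. boundary G (src G e)}"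

definition output_edges :: "('v, 'e, 'x) pgraph_scheme \<Rightarrow> 'e set" where
  "output_edges G = {e \<in> edges G. boundary G (tgt G e)}"

definition edge_step :: "('v, 'e, 'x) pgraph_scheme \<Rightarrow> ('e \<times> 'e) set" where
  "edge_step G = {(e, f). e \<in> edges G \<and> f \<in> edges G \<and> tgt G e = src G f}"

definition arrow :: "('v, 'e, 'x) pgraph_scheme \<Rightarrow> 'e \<Rightarrow> 'e \<Rightarrow> bool" where
  "arrow G e e' \<longleftrightarrow> e \<noteq> e' \<and> (e, e') \<in> (edge_step G)\<^sup>+"

text \<open>Planar order: a (strict) linear order on the edges satisfying (P1) and (P2).\<close>
definition planar_order :: "('v, 'e, 'x) pgraph_scheme \<Rightarrow> bool" where
  "planar_order G \<longleftrightarrow>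
     ord G \<subseteq> edges G \<times> edges G \<and>
     irrefl (ord G) \<and> trans (ord G) \<and> total_on (edges G) (ord G) \<and>
     (\<forall>e1 e2. arrow G e1 e2 \<longrightarrow> (e1, e2) \<in> ord G) \<and>
     (\<forall>e1 e2 e3. (e1, e2) \<in> ord G \<longrightarrow> (e2, e3) \<in> ord G \<longrightarrow> arrow G e1 e3 \<longrightarrow>
        arrow G e1 e2 \<or> arrow G e2 e3)"

definition pop_graph :: "('v, 'e, 'x) pgraph_scheme \<Rightarrow> bool" where
  "pop_graph G \<longleftrightarrow> progressive G \<and> planar_order G"

text \<open>Each connected component (of the underlying undirected graph) has at most
  one internal vertex.\<close>
definition elementary :: "('v, 'e, 'x) pgraph_scheme \<Rightarrow> bool" where
  "elementary G \<longleftrightarrow>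
     (\<forall>u v. internal G u \<longrightarrow> internal G v \<longrightarrow>
        (u, v) \<in> ({(src G e, tgt G e) | e. e \<in> edges G}
                  \<union> {(tgt G e, src G e) | e. e \<in> edges G})\<^sup>* \<longrightarrow> u = v)"

definition elementary_pop :: "('v, 'e, 'x) pgraph_scheme \<Rightarrow> bool" where
  "elementary_pop G \<longleftrightarrow> pop_graph G \<and> elementary G"

text \<open>Isomorphism of POP-graphs (this is the notion of equality of POP-graphs).\<close>
definition pop_iso :: "('v, 'e) pgraph \<Rightarrow> ('w, 'f) pgraph \<Rightarrow> bool" where
  "pop_iso G H \<longleftrightarrow> (\<exists>f g.
     bij_betw f (verts G) (verts H) \<and> bij_betw g (edges G) (edges H) \<and>
     (\<forall>e \<in> edges G. src H (g e) = f (src G e) \<and> tgt H (g e) = f (tgt G e)) \<and>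
     (\<forall>e \<in> edges G. \<forall>e' \<in> edges G. (e, e') \<in> ord G \<longleftrightarrow> (g e, g e') \<in> ord H))"

text \<open>Number of output edges of G strictly before edge a (so the k-th output
  o_k, and every edge of Q_k, has exactly k-1 outputs before it).\<close>
definition outs_before :: "('v, 'e) pgraph \<Rightarrow> 'e \<Rightarrow> nat" where
  "outs_before G a = card {u \<in> output_edges G. (u, a) \<in> ord G}"

text \<open>Number of input edges of G strictly before edge b (every edge of P_k has
  exactly k inputs before it; the k-th input i_k has k-1).\<close>
definition ins_before :: "('v, 'e) pgraph \<Rightarrow> 'e \<Rightarrow> nat" where
  "ins_before G b = card {i \<in> input_edges G. (i, b) \<in> ord G}"

text \<open>The input edge i_k of G2 matched with the output edge o_k of G1.\<close>
definition matched_input :: "('v, 'e) pgraph \<Rightarrow> ('v, 'e) pgraph \<Rightarrow> 'e \<Rightarrow> 'e" where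
  "matched_input G1 G2 u =
     (THE i. i \<in> input_edges G2 \<and> ins_before G2 i = outs_before G1 u)"

definition composable :: "('v, 'e) pgraph \<Rightarrow> ('v, 'e) pgraph \<Rightarrow> bool" where
  "composable G1 G2 \<longleftrightarrow> pop_graph G1 \<and> pop_graph G2 \<and>
     card (output_edges G1) = card (input_edges G2)"

text \<open>Canonical representative of \<open>G2 \<circ> G1\<close>. Edges:
  the edges of G1 (Inl), where the output edge o_k is reused as the name of the
  new edge from the initial vertex of o_k to the terminal vertex of i_k, and the
  edges of G2 other than its inputs (Inr). Order: Q_1, e_1, P_1, ..., Q_n, e_n, P_n.\<close>
definition pop_comp :: "('v, 'e) pgraph \<Rightarrow> ('v, 'e) pgraph \<Rightarrow> ('v + 'v, 'e + 'e) pgraph" where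
  "pop_comp G1 G2 =
     \<lparr> verts = Inl ` {v \<in> verts G1. \<not> is_sink G1 v} \<union> Inr ` {v \<in> verts G2. \<not> is_source G2 v},
       edges = Inl ` edges G1 \<union> Inr ` (edges G2 - input_edges G2),
       src = (\<lambda>x. case x of Inl e \<Rightarrow> Inl (src G1 e) | Inr e \<Rightarrow> Inr (src G2 e)),
       tgt = (\<lambda>x. case x of
                 Inl e \<Rightarrow> (if e \<in> output_edges G1 then Inr (tgt G2 (matched_input G1 G2 e))
                           else Inl (tgt G1 e))
               | Inr e \<Rightarrow> Inr (tgt G2 e)),
       ord = {(Inl a, Inl b) | a b. (a, b) \<in> ord G1}
           \<union> {(Inr a, Inr b) | a b. a \<in> edges G2 - input_edges G2 \<and>
                                   b \<in> edges G2 - input_edges G2 \<and> (a, b) \<in> ord G2}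
           \<union> {(Inl a, Inr b) | a b. a \<in> edges G1 \<and> b \<in> edges G2 - input_edges G2 \<and>
                                   outs_before G1 a < ins_before G2 b}
           \<union> {(Inr b, Inl a) | a b. a \<in> edges G1 \<and> b \<in> edges G2 - input_edges G2 \<and>
                                   ins_before G2 b \<le> outs_before G1 a} \<rparr>"

text \<open>\<open>G = Gs!(n-1) \<circ> ... \<circ> Gs!0\<close> (up to isomorphism, i.e. equality of POP-graphs):
  Hs!k is the partial composite \<open>Gs!k \<circ> ... \<circ> Gs!0\<close>, each composition being defined.\<close>
definition is_composite_of :: "(nat, nat) pgraph list \<Rightarrow> ('v, 'e) pgraph \<Rightarrow> bool" where
  "is_composite_of Gs G \<longleftrightarrow> Gs \<noteq> [] \<and>
     (\<exists>Hs :: (nat, nat) pgraph list.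
        length Hs = length Gs \<and> Hs ! 0 = Gs ! 0 \<and>
        (\<forall>k. 0 < k \<and> k < length Gs \<longrightarrow>
           composable (Hs ! (k - 1)) (Gs ! k) \<and>
           pop_iso (pop_comp (Hs ! (k - 1)) (Gs ! k)) (Hs ! k)) \<and>
        pop_iso (last Hs) G)"

end

theory Submission
  imports Defs
begin

lemma trancl_map_rel:
  assumes "(x,y) \<in> R\<^sup>+" "\<And>a b. (a,b) \<in> R \<Longrightarrow> (h a, h b) \<in> S"
  shows "(h x, h y) \<in> S\<^sup>+"
  using assms(1) by induction (auto intro: trancl_into_trancl assms(2))

lemma acyclic_transfer:
  assumes "acyclic {(src G e, tgt G e)|e. e \<in> edges G}"
    and "\<And>e. e \<in> edges H \<Longrightarrow> \<exists>e'\<in>edges G. h (src H e) = src G e' \<and> h (tgt H e) = tgt G e'"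
  shows "acyclic {(src H e, tgt H e)|e. e \<in> edges H}"
  unfolding acyclic_def
proof (intro allI notI)
  fix x assume "(x,x) \<in> {(src H e, tgt H e)|e. e \<in> edges H}\<^sup>+"
  then have "(h x, h x) \<in> {(src G e, tgt G e)|e. e \<in> edges G}\<^sup>+"
    by (rule trancl_map_rel) (use assms(2) in fastforce)
  then show False using assms(1) unfolding acyclic_def by blast
qed

lemma step_trancl_edges:
  assumes "(a,b) \<in> (edge_step G)\<^sup>+" shows "a \<in> edges G \<and> b \<in> edges G"
  using assms by induction (auto simp: edge_step_def)

lemma arrow_edges: "arrow G a b \<Longrightarrow> a \<in> edges G \<and> b \<in> edges G"
  unfolding arrow_def by (auto dest: step_trancl_edges)

lemma iso_transfer:
  fixes H :: "('w,'f) pgraph" and G :: "('v,'e) pgraph"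
  assumes pop: "pop_graph G"
    and f: "bij_betw f (verts H) (verts G)" and g: "bij_betw g (edges H) (edges G)"
    and st: "\<forall>e\<in>edges H. src G (g e) = f (src H e) \<and> tgt G (g e) = f (tgt H e)"
    and o: "\<forall>e\<in>edges H. \<forall>e'\<in>edges H. (e,e')\<in>ord H \<longleftrightarrow> (g e, g e')\<in>ord G"
    and inV: "\<forall>e\<in>edges H. src H e \<in> verts H \<and> tgt H e \<in> verts H"
    and oH: "ord H \<subseteq> edges H \<times> edges H"
  shows "pop_graph H"
proof -
  have prog: "progressive G" and pl: "planar_order G" using pop by (auto simp: pop_graph_def)
  have fi: "inj_on f (verts H)" and gi: "inj_on g (edges H)" and gs: "g ` edges H = edges G"
    and fs: "f ` verts H = verts G"
    using f g by (auto simp: bij_betw_def)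
  have indeg: "indeg H y = indeg G (f y)" if y: "y \<in> verts H" for y
  proof -
    have "g ` {e\<in>edges H. tgt H e = y} = {e\<in>edges G. tgt G e = f y}"
    proof
      show "g ` {e\<in>edges H. tgt H e = y} \<subseteq> {e\<in>edges G. tgt G e = f y}"
        using st gs by auto
      show "{e\<in>edges G. tgt G e = f y} \<subseteq> g ` {e\<in>edges H. tgt H e = y}"
      proof
        fix e assume "e \<in> {e\<in>edges G. tgt G e = f y}"
        then have "e \<in> g ` edges H" "tgt G e = f y" using gs by auto
        then obtain e' where e': "e' \<in> edges H" "e = g e'" "tgt G e = f y" by blast
        then have "f (tgt H e') = f y" using st by auto
        then have "tgt H e' = y" using fi inV e' y by (auto dest: inj_onD)
        then show "e \<in> g ` {e\<in>edges H. tgt H e = y}" using e' by auto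
      qed
    qed
    moreover have "inj_on g {e\<in>edges H. tgt H e = y}" using gi by (rule inj_on_subset) auto
    ultimately show ?thesis unfolding indeg_def by (metis (no_types, lifting) card_image)
  qed
  have outdeg: "outdeg H y = outdeg G (f y)" if y: "y \<in> verts H" for y
  proof -
    have "g ` {e\<in>edges H. src H e = y} = {e\<in>edges G. src G e = f y}"
    proof
      show "g ` {e\<in>edges H. src H e = y} \<subseteq> {e\<in>edges G. src G e = f y}"
        using st gs by auto
      show "{e\<in>edges G. src G e = f y} \<subseteq> g ` {e\<in>edges H. src H e = y}"
      proof
        fix e assume "e \<in> {e\<in>edges G. src G e = f y}"
        then have "e \<in> g ` edges H" "src G e = f y" using gs by auto
        then obtain e' where e': "e' \<in> edges H" "e = g e'" "src G e = f y" by blast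
        then have "f (src H e') = f y" using st by auto
        then have "src H e' = y" using fi inV e' y by (auto dest: inj_onD)
        then show "e \<in> g ` {e\<in>edges H. src H e = y}" using e' by auto
      qed
    qed
    moreover have "inj_on g {e\<in>edges H. src H e = y}" using gi by (rule inj_on_subset) auto
    ultimately show ?thesis unfolding outdeg_def by (metis (no_types, lifting) card_image)
  qed
  have deg: "deg H y = deg G (f y)" if "y \<in> verts H" for y
    using indeg outdeg that by (simp add: deg_def)
  have finV: "finite (verts H)" using f prog by (metis bij_betw_finite progressive_def)
  have finE: "finite (edges H)" using g prog by (metis bij_betw_finite progressive_def)
  have acyc: "acyclic {(src H e, tgt H e)|e. e \<in> edges H}"
    apply (rule acyclic_transfer[where G=G and h=f])
    using prog apply (simp add: progressive_def)
    using st gs by force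
  have srcs: "deg H y = 1" if "is_source H y" for y
  proof -
    have "y \<in> verts H" "indeg H y = 0" using that by (auto simp: is_source_def)
    then have "is_source G (f y)" using indeg fs by (auto simp: is_source_def)
    then show ?thesis using prog deg \<open>y \<in> verts H\<close> by (auto simp: progressive_def)
  qed
  have snks: "deg H y = 1" if "is_sink H y" for y
  proof -
    have "y \<in> verts H" "outdeg H y = 0" using that by (auto simp: is_sink_def)
    then have "is_sink G (f y)" using outdeg fs by (auto simp: is_sink_def)
    then show ?thesis using prog deg \<open>y \<in> verts H\<close> by (auto simp: progressive_def)
  qed
  have progH: "progressive H" using finV finE inV acyc srcs snks by (auto simp: progressive_def)
  have stepeq: "(g a, g b) \<in> edge_step G \<longleftrightarrow> (a,b) \<in> edge_step H" if "a \<in> edges H" "b \<in> edges H" for a b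
  proof -
    have "tgt G (g a) = src G (g b) \<longleftrightarrow> tgt H a = src H b"
      using st that inV fi by (auto dest: inj_onD)
    then show ?thesis using that gs by (auto simp: edge_step_def)
  qed
  have tr1: "(g a, g b) \<in> (edge_step G)\<^sup>+" if "(a,b) \<in> (edge_step H)\<^sup>+" for a b
    using that by (rule trancl_map_rel) (use stepeq in \<open>auto simp: edge_step_def\<close>)
  have tr2: "\<forall>b\<in>edges H. y = g b \<longrightarrow> (\<forall>a\<in>edges H. x = g a \<longrightarrow> (a,b) \<in> (edge_step H)\<^sup>+)"
    if "(x,y) \<in> (edge_step G)\<^sup>+" for x y
    using that
  proof induction
    case (base y)
    then show ?case using stepeq by auto
  next
    case (step z y)
    have "z \<in> edges G" using step(2) by (auto simp: edge_step_def)
    then obtain c where c: "c \<in> edges H" "z = g c" using gs by auto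
    show ?case
    proof (intro ballI impI)
      fix b a assume "b \<in> edges H" "y = g b" "a \<in> edges H" "x = g a"
      then have "(a,c) \<in> (edge_step H)\<^sup>+" using step(3) c by auto
      moreover have "(c,b) \<in> edge_step H" using stepeq c step(2) \<open>b \<in> edges H\<close> \<open>y = g b\<close> by auto
      ultimately show "(a,b) \<in> (edge_step H)\<^sup>+" by auto
    qed
  qed
  have arr: "arrow H a b \<longleftrightarrow> arrow G (g a) (g b)" if "a \<in> edges H" "b \<in> edges H" for a b
    using tr1 tr2 that gi unfolding arrow_def by (auto dest: inj_onD)
  have arrH: "arrow H a b \<Longrightarrow> a \<in> edges H \<and> b \<in> edges H" for a b by (rule arrow_edges)
  have plo: "ord G \<subseteq> edges G \<times> edges G" "irrefl (ord G)" "trans (ord G)" "total_on (edges G) (ord G)"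
    "\<forall>e1 e2. arrow G e1 e2 \<longrightarrow> (e1, e2) \<in> ord G"
    "\<forall>e1 e2 e3. (e1, e2) \<in> ord G \<longrightarrow> (e2, e3) \<in> ord G \<longrightarrow> arrow G e1 e3 \<longrightarrow>
        arrow G e1 e2 \<or> arrow G e2 e3"
    using pl by (auto simp: planar_order_def)
  have "irrefl (ord H)" using plo(2) o oH unfolding irrefl_def by auto
  moreover have "trans (ord H)"
    unfolding trans_def
  proof (intro allI impI)
    fix x y z assume "(x,y) \<in> ord H" "(y,z) \<in> ord H"
    moreover have m: "x \<in> edges H" "y \<in> edges H" "z \<in> edges H" using calculation oH by auto
    ultimately have "(g x, g y) \<in> ord G" "(g y, g z) \<in> ord G" using o by auto
    then have "(g x, g z) \<in> ord G" by (rule transD[OF plo(3)])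
    then show "(x,z) \<in> ord H" using o m by auto
  qed
  moreover have "total_on (edges H) (ord H)"
    unfolding total_on_def
  proof (intro ballI impI)
    fix x y assume "x \<in> edges H" "y \<in> edges H" "x \<noteq> y"
    then have "g x \<noteq> g y" "g x \<in> edges G" "g y \<in> edges G" using gi gs by (auto dest: inj_onD)
    then show "(x,y) \<in> ord H \<or> (y,x) \<in> ord H" using plo(4) o \<open>x \<in> edges H\<close> \<open>y \<in> edges H\<close>
      unfolding total_on_def by auto
  qed
  moreover have "\<forall>e1 e2. arrow H e1 e2 \<longrightarrow> (e1, e2) \<in> ord H"
    using arr arrH plo(5) o by blast
  moreover have "\<forall>e1 e2 e3. (e1, e2) \<in> ord H \<longrightarrow> (e2, e3) \<in> ord H \<longrightarrow> arrow H e1 e3 \<longrightarrow>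
        arrow H e1 e2 \<or> arrow H e2 e3"
  proof (intro allI impI)
    fix e1 e2 e3 assume a: "(e1, e2) \<in> ord H" "(e2, e3) \<in> ord H" "arrow H e1 e3"
    then have m: "e1 \<in> edges H" "e2 \<in> edges H" "e3 \<in> edges H" using oH by auto
    then show "arrow H e1 e2 \<or> arrow H e2 e3" using a plo(6) o arr by blast
  qed
  ultimately have "planar_order H" using oH by (simp add: planar_order_def)
  then show ?thesis using progH by (simp add: pop_graph_def)
qed

lemma rename_exists:
  fixes G :: "('v,'e) pgraph"
  assumes pop: "pop_graph G"
  shows "\<exists>H :: (nat,nat) pgraph. pop_graph H \<and> pop_iso H G"
proof -
  have prog: "progressive G" using pop by (simp add: pop_graph_def)
  obtain \<phi> :: "'v \<Rightarrow> nat" where phi: "inj_on \<phi> (verts G)"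
    using finite_imp_inj_to_nat_seg prog by (metis progressive_def)
  obtain \<psi> :: "'e \<Rightarrow> nat" where psi: "inj_on \<psi> (edges G)"
    using finite_imp_inj_to_nat_seg prog by (metis progressive_def)
  define f where "f = inv_into (verts G) \<phi>"
  define g where "g = inv_into (edges G) \<psi>"
  define H :: "(nat,nat) pgraph" where "H = \<lparr> verts = \<phi> ` verts G, edges = \<psi> ` edges G,
     src = (\<lambda>e. \<phi> (src G (g e))), tgt = (\<lambda>e. \<phi> (tgt G (g e))),
     ord = (\<lambda>(a,b). (\<psi> a, \<psi> b)) ` ord G \<rparr>"
  have oG: "ord G \<subseteq> edges G \<times> edges G" using pop by (simp add: pop_graph_def planar_order_def)
  have fb: "bij_betw f (verts H) (verts G)" unfolding f_def H_def
    using phi by (simp add: bij_betw_inv_into inj_on_imp_bij_betw)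
  have gb: "bij_betw g (edges H) (edges G)" unfolding g_def H_def
    using psi by (simp add: bij_betw_inv_into inj_on_imp_bij_betw)
  have gpsi: "g (\<psi> a) = a" if "a \<in> edges G" for a using psi that by (simp add: g_def)
  have fphi: "f (\<phi> a) = a" if "a \<in> verts G" for a using phi that by (simp add: f_def)
  have srcin: "src G e \<in> verts G \<and> tgt G e \<in> verts G" if "e \<in> edges G" for e
    using prog that by (auto simp: progressive_def)
  have st: "\<forall>e\<in>edges H. src G (g e) = f (src H e) \<and> tgt G (g e) = f (tgt H e)"
    unfolding H_def using gpsi fphi srcin by auto
  have o: "\<forall>e\<in>edges H. \<forall>e'\<in>edges H. (e,e')\<in>ord H \<longleftrightarrow> (g e, g e')\<in>ord G"
  proof (intro ballI)
    fix e e' assume "e \<in> edges H" "e' \<in> edges H"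
    then obtain a b where ab: "a \<in> edges G" "b \<in> edges G" "e = \<psi> a" "e' = \<psi> b" unfolding H_def by auto
    have "(\<psi> a, \<psi> b) \<in> (\<lambda>(a,b). (\<psi> a, \<psi> b)) ` ord G \<longleftrightarrow> (a,b) \<in> ord G"
    proof
      assume "(\<psi> a, \<psi> b) \<in> (\<lambda>(a,b). (\<psi> a, \<psi> b)) ` ord G"
      then obtain c d where "(c,d) \<in> ord G" "\<psi> c = \<psi> a" "\<psi> d = \<psi> b" by auto
      moreover then have "c = a" "d = b" using oG ab psi by (auto dest: inj_onD)
      ultimately show "(a,b) \<in> ord G" by simp
    qed auto
    then show "(e,e')\<in>ord H \<longleftrightarrow> (g e, g e')\<in>ord G" using ab gpsi unfolding H_def by simp
  qed
  have inV: "\<forall>e\<in>edges H. src H e \<in> verts H \<and> tgt H e \<in> verts H"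
    unfolding H_def using gpsi srcin by auto
  have oH: "ord H \<subseteq> edges H \<times> edges H" unfolding H_def using oG by auto
  have "pop_graph H" by (rule iso_transfer[OF pop fb gb st o inV oH])
  moreover have "pop_iso H G" unfolding pop_iso_def using fb gb st o by blast
  ultimately show ?thesis by blast
qed



lemma odd_ne1[simp]: "2*(a::nat) \<noteq> 2*b+1" by presburger
lemma odd_ne2[simp]: "2*(a::nat)+1 \<noteq> 2*b" by presburger
lemma odd_ne3[simp]: "Suc (2*(a::nat)) \<noteq> 2*b" by presburger
lemma odd_ne4[simp]: "2*(a::nat) \<noteq> Suc (2*b)" by presburger

locale step =
  fixes G :: "(nat,nat) pgraph" and v :: nat
  assumes pop: "pop_graph G" and vV: "v \<in> verts G" and vint: "deg G v \<noteq> 1"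
    and maxv: "\<And>e. e \<in> edges G \<Longrightarrow> src G e = v \<Longrightarrow> is_sink G (tgt G e)"
begin

definition "inE = {e \<in> edges G. tgt G e = v}"
definition "outE = {e \<in> edges G. src G e = v}"
definition "W = {e \<in> edges G. is_sink G (tgt G e) \<and> src G e \<noteq> v}"
definition "C = inE \<union> W"
definition "E' = edges G - outE"
definition "kept = {x \<in> verts G. x \<noteq> v \<and> x \<notin> tgt G ` outE}"
definition "EE = C \<union> outE"

definition Gp :: "(nat,nat) pgraph" where
  "Gp = \<lparr> verts = (\<lambda>x. 2*x) ` kept \<union> (\<lambda>e. 2*e+1) ` inE, edges = E',
          src = (\<lambda>e. 2 * src G e),
          tgt = (\<lambda>e. if tgt G e = v then 2*e+1 else 2 * tgt G e),
          ord = ord G \<inter> (E' \<times> E') \<rparr>"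

definition Ep :: "(nat,nat) pgraph" where
  "Ep = \<lparr> verts = {2*v} \<union> (\<lambda>e. 2*e+1) ` C \<union> (\<lambda>t. 2*t) ` {t \<in> verts G. is_sink G t},
          edges = EE,
          src = (\<lambda>e. if src G e = v then 2*v else 2*e+1),
          tgt = (\<lambda>e. 2 * tgt G e),
          ord = ord G \<inter> (EE \<times> EE) \<rparr>"

lemma prog: "progressive G" using pop by (simp add: pop_graph_def)
lemma pl: "planar_order G" using pop by (simp add: pop_graph_def)
lemma finE: "finite (edges G)" using prog by (simp add: progressive_def)
lemma finV: "finite (verts G)" using prog by (simp add: progressive_def)
lemma srcV: "e \<in> edges G \<Longrightarrow> src G e \<in> verts G" using prog by (simp add: progressive_def)
lemma tgtV: "e \<in> edges G \<Longrightarrow> tgt G e \<in> verts G" using prog by (simp add: progressive_def)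
lemma acyc: "acyclic {(src G e, tgt G e) | e. e \<in> edges G}" using prog by (simp add: progressive_def)
lemma oG: "ord G \<subseteq> edges G \<times> edges G" using pl by (simp add: planar_order_def)
lemma irr: "(a,a) \<notin> ord G" using pl by (simp add: planar_order_def irrefl_def)
lemma trs: "(a,b) \<in> ord G \<Longrightarrow> (b,c) \<in> ord G \<Longrightarrow> (a,c) \<in> ord G"
  using pl by (auto simp: planar_order_def dest: transD)
lemma tot: "a \<in> edges G \<Longrightarrow> b \<in> edges G \<Longrightarrow> a \<noteq> b \<Longrightarrow> (a,b) \<in> ord G \<or> (b,a) \<in> ord G"
  using pl by (auto simp: planar_order_def total_on_def)
lemma P1: "arrow G a b \<Longrightarrow> (a,b) \<in> ord G" using pl by (simp add: planar_order_def)
lemma P2: "(e1, e2) \<in> ord G \<Longrightarrow> (e2, e3) \<in> ord G \<Longrightarrow> arrow G e1 e3 \<Longrightarrow>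
        arrow G e1 e2 \<or> arrow G e2 e3" using pl by (simp add: planar_order_def)

lemma noloop: "e \<in> edges G \<Longrightarrow> src G e \<noteq> tgt G e"
  using acyc unfolding acyclic_def by (metis (mono_tags, lifting) mem_Collect_eq r_into_trancl')

lemma card0_filter: "finite A \<Longrightarrow> card {e\<in>A. P e} = 0 \<Longrightarrow> e \<in> A \<Longrightarrow> \<not> P e"
  by auto

lemma sink_no_out: "is_sink G t \<Longrightarrow> e \<in> edges G \<Longrightarrow> src G e \<noteq> t"
  using finE by (auto simp: is_sink_def outdeg_def)

lemma sink_deg: "is_sink G t \<Longrightarrow> deg G t = 1" using prog by (simp add: progressive_def)
lemma source_deg: "is_source G t \<Longrightarrow> deg G t = 1" using prog by (simp add: progressive_def)

lemma sink_indeg: "is_sink G t \<Longrightarrow> indeg G t = 1"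
  using sink_deg by (auto simp: deg_def is_sink_def)

lemma sink_unique_in:
  assumes "is_sink G t" "e \<in> edges G" "e' \<in> edges G" "tgt G e = t" "tgt G e' = t"
  shows "e = e'"
proof -
  have "card {e\<in>edges G. tgt G e = t} = 1" using sink_indeg assms(1) by (simp add: indeg_def)
  then obtain x where X: "{e\<in>edges G. tgt G e = t} = {x}" by (rule card_1_singletonE)
  have "e \<in> {e\<in>edges G. tgt G e = t}" "e' \<in> {e\<in>edges G. tgt G e = t}" using assms by auto
  then show ?thesis unfolding X by simp
qed

lemma indeg_pos: "e \<in> edges G \<Longrightarrow> indeg G (tgt G e) \<noteq> 0"
  using finE unfolding indeg_def by auto

lemma outdeg_pos: "e \<in> edges G \<Longrightarrow> outdeg G (src G e) \<noteq> 0"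
  using finE unfolding outdeg_def by auto

lemma bd_sink: "x \<in> verts G \<Longrightarrow> deg G x = 1 \<Longrightarrow> indeg G x \<noteq> 0 \<Longrightarrow> is_sink G x"
  by (auto simp: deg_def is_sink_def)

lemma v_not_sink: "\<not> is_sink G v" using sink_deg vint by auto
lemma v_not_source: "\<not> is_source G v" using source_deg vint by auto

lemma inE_ne: "inE \<noteq> {}"
proof -
  have "card inE \<noteq> 0" using v_not_source vV unfolding is_source_def indeg_def inE_def by auto
  then show ?thesis by (metis card.empty)
qed
lemma outE_ne: "outE \<noteq> {}"
proof -
  have "card outE \<noteq> 0" using v_not_sink vV unfolding is_sink_def outdeg_def outE_def by auto
  then show ?thesis by (metis card.empty)
qed

lemma outE_sink: "f \<in> outE \<Longrightarrow> is_sink G (tgt G f)"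
  using maxv by (auto simp: outE_def)

lemma outE_no_succ: "f \<in> outE \<Longrightarrow> (f, g) \<notin> edge_step G"
  using outE_sink sink_no_out by (fastforce simp: edge_step_def)

lemma inE_outE_disj: "e \<in> inE \<Longrightarrow> e \<notin> outE"
  unfolding inE_def outE_def using noloop[of e] by auto

lemma C_edges: "C \<subseteq> edges G" by (auto simp: C_def inE_def W_def)
lemma C_src: "e \<in> C \<Longrightarrow> src G e \<noteq> v"
  unfolding C_def inE_def W_def using noloop[of e] by auto
lemma C_outE: "e \<in> C \<Longrightarrow> e \<notin> outE" using C_src by (auto simp: outE_def)
lemma C_E': "C \<subseteq> E'" using C_edges C_outE by (auto simp: E'_def)
lemma inE_C: "inE \<subseteq> C" by (auto simp: C_def)
lemma EE_edges: "EE \<subseteq> edges G" using C_edges by (auto simp: EE_def outE_def)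
lemma EE_minus: "EE - C = outE" using C_outE by (auto simp: EE_def)
lemma EE_C: "e \<in> EE \<Longrightarrow> src G e \<noteq> v \<Longrightarrow> e \<in> C" by (auto simp: EE_def outE_def)
lemma finC: "finite C" using C_edges finE finite_subset by blast
lemma finEE: "finite EE" using EE_edges finE finite_subset by blast
lemma finE': "finite E'" using finE by (simp add: E'_def)

lemma edges_split: "edges G = E' \<union> outE" by (auto simp: E'_def outE_def)

lemma F3: "(e,f) \<in> (edge_step G)\<^sup>+ \<Longrightarrow> e \<in> inE \<Longrightarrow> f \<in> outE"
proof (induction rule: trancl_induct)
  case (base y) then show ?case by (auto simp: edge_step_def inE_def outE_def)
next
  case (step y z) then show ?case using outE_no_succ by auto
qed

lemma kept_tgt: "e \<in> E' \<Longrightarrow> tgt G e \<noteq> v \<Longrightarrow> tgt G e \<in> kept"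
proof -
  assume a: "e \<in> E'" "tgt G e \<noteq> v"
  have "tgt G e \<notin> tgt G ` outE"
  proof
    assume "tgt G e \<in> tgt G ` outE"
    then obtain f where f: "f \<in> outE" "tgt G f = tgt G e" by auto
    have "is_sink G (tgt G f)" using f(1) by (rule outE_sink)
    then have "f = e" using sink_unique_in f a by (auto simp: outE_def E'_def)
    then show False using a f by (auto simp: E'_def)
  qed
  then show ?thesis using a tgtV by (auto simp: kept_def E'_def)
qed

lemma kept_src: "e \<in> E' \<Longrightarrow> src G e \<in> kept"
proof -
  assume a: "e \<in> E'"
  have "src G e \<notin> tgt G ` outE"
  proof
    assume "src G e \<in> tgt G ` outE"
    then obtain f where f: "f \<in> outE" "tgt G f = src G e" by auto
    have "is_sink G (tgt G f)" using f(1) by (rule outE_sink)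
    then show False using sink_no_out f a by (auto simp: E'_def)
  qed
  then show ?thesis using a srcV by (auto simp: kept_def E'_def outE_def)
qed

lemma kept_sub: "x \<in> kept \<Longrightarrow> x \<in> verts G \<and> x \<noteq> v" by (auto simp: kept_def)

lemma Gp_simps: "verts Gp = (\<lambda>x. 2*x) ` kept \<union> (\<lambda>e. 2*e+1) ` inE" "edges Gp = E'"
  "src Gp = (\<lambda>e. 2 * src G e)" "tgt Gp = (\<lambda>e. if tgt G e = v then 2*e+1 else 2 * tgt G e)"
  "ord Gp = ord G \<inter> (E' \<times> E')"
  by (simp_all add: Gp_def)

lemma Gp_indeg_kept: "x \<in> kept \<Longrightarrow> indeg Gp (2*x) = indeg G x"
proof -
  assume x: "x \<in> kept"
  have "{e \<in> edges Gp. tgt Gp e = 2*x} = {e\<in>edges G. tgt G e = x}"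
    using x by (auto simp: Gp_simps kept_def E'_def)
  then show ?thesis by (simp add: indeg_def)
qed

lemma Gp_outdeg_kept: "x \<in> kept \<Longrightarrow> outdeg Gp (2*x) = outdeg G x"
proof -
  assume x: "x \<in> kept"
  have "{e \<in> edges Gp. src Gp e = 2*x} = {e\<in>edges G. src G e = x}"
    using x by (auto simp: Gp_simps kept_def E'_def outE_def)
  then show ?thesis by (simp add: outdeg_def)
qed

lemma Gp_deg_kept: "x \<in> kept \<Longrightarrow> deg Gp (2*x) = deg G x"
  by (simp add: deg_def Gp_indeg_kept Gp_outdeg_kept)

lemma Gp_indeg_new: "e \<in> inE \<Longrightarrow> indeg Gp (2*e+1) = 1"
proof -
  assume e: "e \<in> inE"
  have "{f \<in> edges Gp. tgt Gp f = 2*e+1} = {e}"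
    using e inE_outE_disj by (auto simp: Gp_simps inE_def E'_def)
  then show ?thesis by (simp add: indeg_def)
qed

lemma Gp_outdeg_new: "outdeg Gp (2*e+1) = 0"
  by (simp add: outdeg_def Gp_simps)

lemma Gp_deg_new: "e \<in> inE \<Longrightarrow> deg Gp (2*e+1) = 1"
  using Gp_indeg_new[of e] Gp_outdeg_new[of e] by (simp add: deg_def)

lemma Gp_vertsE: "y \<in> verts Gp \<Longrightarrow> (\<And>x. x \<in> kept \<Longrightarrow> y = 2*x \<Longrightarrow> P) \<Longrightarrow> (\<And>e. e \<in> inE \<Longrightarrow> y = 2*e+1 \<Longrightarrow> P) \<Longrightarrow> P"
  by (auto simp: Gp_simps)

lemma Gp_tgt_in: "e \<in> E' \<Longrightarrow> tgt Gp e \<in> verts Gp"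
  using kept_tgt by (auto simp: Gp_simps inE_def E'_def)

lemma Gp_prog: "progressive Gp"
proof -
  have "finite (verts Gp)" using finE finV by (auto simp: Gp_simps kept_def inE_def)
  moreover have "finite (edges Gp)" using finE' by (simp add: Gp_simps)
  moreover have "\<forall>e \<in> edges Gp. src Gp e \<in> verts Gp \<and> tgt Gp e \<in> verts Gp"
    using Gp_tgt_in kept_src by (auto simp: Gp_simps)
  moreover have "acyclic {(src Gp e, tgt Gp e) | e. e \<in> edges Gp}"
  proof (rule acyclic_transfer[where G=G and h="\<lambda>y. if even y then y div 2 else v"])
    show "acyclic {(src G e, tgt G e) |e. e \<in> edges G}" by (rule acyc)
    fix e assume "e \<in> edges Gp"
    then show "\<exists>e'\<in>edges G. (if even (src Gp e) then src Gp e div 2 else v) = src G e' \<and>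
              (if even (tgt Gp e) then tgt Gp e div 2 else v) = tgt G e'"
      by (intro bexI[of _ e]) (auto simp: Gp_simps E'_def)
  qed
  moreover have "deg Gp y = 1" if "is_source Gp y" for y
  proof -
    have y: "y \<in> verts Gp" "indeg Gp y = 0" using that by (auto simp: is_source_def)
    show ?thesis
    proof (rule Gp_vertsE[OF y(1)])
      fix x assume "x \<in> kept" "y = 2*x"
      then show ?thesis using y Gp_indeg_kept Gp_deg_kept source_deg kept_sub
        by (auto simp: is_source_def)
    next
      fix e assume "e \<in> inE" "y = 2*e+1" then show ?thesis using y Gp_indeg_new by simp
    qed
  qed
  moreover have "deg Gp y = 1" if "is_sink Gp y" for y
  proof -
    have y: "y \<in> verts Gp" "outdeg Gp y = 0" using that by (auto simp: is_sink_def)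
    show ?thesis
    proof (rule Gp_vertsE[OF y(1)])
      fix x assume "x \<in> kept" "y = 2*x"
      then show ?thesis using y Gp_outdeg_kept Gp_deg_kept sink_deg kept_sub
        by (auto simp: is_sink_def)
    next
      fix e assume "e \<in> inE" "y = 2*e+1" then show ?thesis using Gp_deg_new by simp
    qed
  qed
  ultimately show ?thesis by (simp add: progressive_def)
qed

lemma Gp_step: "edge_step Gp = edge_step G \<inter> (E' \<times> E')"
  by (auto simp: edge_step_def Gp_simps E'_def inE_def outE_def split: if_splits)

lemma Gp_trancl: "(a,b) \<in> (edge_step G)\<^sup>+ \<Longrightarrow> b \<notin> outE \<Longrightarrow> (a,b) \<in> (edge_step Gp)\<^sup>+"
proof (induction rule: trancl_induct)
  case (base y)
  then have "a \<notin> outE" using outE_no_succ by blast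
  then have "(a,y) \<in> edge_step G \<inter> (E' \<times> E')" using base by (auto simp: E'_def edge_step_def)
  then show ?case unfolding Gp_step[symmetric] by auto
next
  case (step y z)
  then have "y \<notin> outE" using outE_no_succ by blast
  then have "(a,y) \<in> (edge_step Gp)\<^sup>+" using step by auto
  moreover have "(y,z) \<in> edge_step G \<inter> (E' \<times> E')" using step \<open>y \<notin> outE\<close> by (auto simp: E'_def edge_step_def)
  then have "(y,z) \<in> edge_step Gp" unfolding Gp_step .
  ultimately show ?case by auto
qed

lemma Gp_arrow1: "arrow Gp a b \<Longrightarrow> arrow G a b"
  unfolding arrow_def Gp_step by (meson Int_lower1 trancl_mono)

lemma Gp_arrow2: "arrow G a b \<Longrightarrow> b \<notin> outE \<Longrightarrow> arrow Gp a b"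
  unfolding arrow_def using Gp_trancl by auto

lemma Gp_planar: "planar_order Gp"
proof -
  have "ord Gp \<subseteq> edges Gp \<times> edges Gp" by (auto simp: Gp_simps)
  moreover have "irrefl (ord Gp)" using irr by (auto simp: Gp_simps irrefl_def)
  moreover have "trans (ord Gp)" using trs by (auto simp: Gp_simps trans_def)
  moreover have "total_on (edges Gp) (ord Gp)" using tot by (auto simp: Gp_simps total_on_def E'_def)
  moreover have "\<forall>e1 e2. arrow Gp e1 e2 \<longrightarrow> (e1, e2) \<in> ord Gp"
    using Gp_arrow1 P1 arrow_edges by (fastforce simp: Gp_simps)
  moreover have "\<forall>e1 e2 e3. (e1, e2) \<in> ord Gp \<longrightarrow> (e2, e3) \<in> ord Gp \<longrightarrow> arrow Gp e1 e3 \<longrightarrow>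
        arrow Gp e1 e2 \<or> arrow Gp e2 e3"
  proof (intro allI impI)
    fix e1 e2 e3 assume a: "(e1, e2) \<in> ord Gp" "(e2, e3) \<in> ord Gp" "arrow Gp e1 e3"
    then have "arrow G e1 e2 \<or> arrow G e2 e3" using P2 Gp_arrow1 by (auto simp: Gp_simps)
    moreover have "e2 \<notin> outE" "e3 \<notin> outE" using a by (auto simp: Gp_simps E'_def)
    ultimately show "arrow Gp e1 e2 \<or> arrow Gp e2 e3" using Gp_arrow2 by blast
  qed
  ultimately show ?thesis by (simp add: planar_order_def)
qed

lemma Gp_pop: "pop_graph Gp" using Gp_prog Gp_planar by (simp add: pop_graph_def)

lemma Gp_internal:
  "{y \<in> verts Gp. deg Gp y \<noteq> 1} = (\<lambda>x. 2*x) ` ({x \<in> verts G. deg G x \<noteq> 1} - {v})"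
proof
  show "{y \<in> verts Gp. deg Gp y \<noteq> 1} \<subseteq> (\<lambda>x. 2*x) ` ({x \<in> verts G. deg G x \<noteq> 1} - {v})"
  proof
    fix y assume y: "y \<in> {y \<in> verts Gp. deg Gp y \<noteq> 1}"
    show "y \<in> (\<lambda>x. 2*x) ` ({x \<in> verts G. deg G x \<noteq> 1} - {v})"
    proof (rule Gp_vertsE[of y])
      fix x assume "x \<in> kept" "y = 2*x"
      then show ?thesis using y Gp_deg_kept kept_sub by auto
    next
      fix e assume "e \<in> inE" "y = 2*e+1" then show ?thesis using y Gp_deg_new by auto
    qed (use y in auto)
  qed
  show "(\<lambda>x. 2*x) ` ({x \<in> verts G. deg G x \<noteq> 1} - {v}) \<subseteq> {y \<in> verts Gp. deg Gp y \<noteq> 1}"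
  proof
    fix y assume "y \<in> (\<lambda>x. 2*x) ` ({x \<in> verts G. deg G x \<noteq> 1} - {v})"
    then obtain x where x: "y = 2*x" "x \<in> verts G" "deg G x \<noteq> 1" "x \<noteq> v" by auto
    have "x \<notin> tgt G ` outE" using x outE_sink sink_deg by auto
    then have "x \<in> kept" using x by (auto simp: kept_def)
    then show "y \<in> {y \<in> verts Gp. deg Gp y \<noteq> 1}" using x Gp_deg_kept by (auto simp: Gp_simps)
  qed
qed

lemma Gp_internal_card:
  "card {y \<in> verts Gp. deg Gp y \<noteq> 1} = card {x \<in> verts G. deg G x \<noteq> 1} - 1"
proof -
  have "card {y \<in> verts Gp. deg Gp y \<noteq> 1} = card ({x \<in> verts G. deg G x \<noteq> 1} - {v})"
    unfolding Gp_internal by (rule card_image) (auto simp: inj_on_def)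
  also have "\<dots> = card {x \<in> verts G. deg G x \<noteq> 1} - 1"
    using vV vint finV by (subst card_Diff_singleton) auto
  finally show ?thesis .
qed

lemma Gp_outputs: "output_edges Gp = C"
proof -
  have "e \<in> output_edges Gp \<longleftrightarrow> e \<in> C" for e
  proof (cases "e \<in> E'")
    case True
    show ?thesis
    proof (cases "tgt G e = v")
      case tv: True
      then have "e \<in> inE" using True by (auto simp: inE_def E'_def)
      then show ?thesis using Gp_deg_new True tv inE_C
        by (auto simp: output_edges_def boundary_def Gp_simps)
    next
      case tv: False
      then have k: "tgt G e \<in> kept" using kept_tgt True by blast
      have "boundary Gp (tgt Gp e) \<longleftrightarrow> deg G (tgt G e) = 1"
        using k tv Gp_deg_kept by (auto simp: boundary_def Gp_simps)
      also have "\<dots> \<longleftrightarrow> is_sink G (tgt G e)"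
        using sink_deg bd_sink[of "tgt G e"] indeg_pos[of e] True tgtV by (auto simp: E'_def)
      also have "\<dots> \<longleftrightarrow> e \<in> C" using True tv by (auto simp: C_def W_def inE_def E'_def outE_def)
      finally show ?thesis using True by (simp add: output_edges_def Gp_simps)
    qed
  next
    case False then show ?thesis using C_E' by (auto simp: output_edges_def Gp_simps)
  qed
  then show ?thesis by blast
qed

end


context step begin

lemma Ep_simps: "verts Ep = {2*v} \<union> (\<lambda>e. 2*e+1) ` C \<union> (\<lambda>t. 2*t) ` {t \<in> verts G. is_sink G t}"
  "edges Ep = EE" "src Ep = (\<lambda>e. if src G e = v then 2*v else 2*e+1)"
  "tgt Ep = (\<lambda>e. 2 * tgt G e)" "ord Ep = ord G \<inter> (EE \<times> EE)"
  by (simp_all add: Ep_def)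

lemma Ep_vertsE: "y \<in> verts Ep \<Longrightarrow> (y = 2*v \<Longrightarrow> P) \<Longrightarrow> (\<And>e. e \<in> C \<Longrightarrow> y = 2*e+1 \<Longrightarrow> P)
   \<Longrightarrow> (\<And>t. t \<in> verts G \<Longrightarrow> is_sink G t \<Longrightarrow> y = 2*t \<Longrightarrow> P) \<Longrightarrow> P"
  by (auto simp: Ep_simps)

lemma inE_EE: "inE \<subseteq> EE" using inE_C by (auto simp: EE_def)
lemma outE_EE: "outE \<subseteq> EE" by (auto simp: EE_def)
lemma outE_edges: "outE \<subseteq> edges G" by (auto simp: outE_def)
lemma inE_edges: "inE \<subseteq> edges G" by (auto simp: inE_def)

lemma W_no_succ: "e \<in> W \<Longrightarrow> (e, f) \<notin> edge_step G"
  using sink_no_out by (fastforce simp: edge_step_def W_def)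

lemma sink_in_EE: "e \<in> edges G \<Longrightarrow> is_sink G (tgt G e) \<Longrightarrow> e \<in> EE"
  by (auto simp: EE_def C_def W_def outE_def)

lemma EE_cases: "e \<in> EE \<Longrightarrow> (e \<in> inE \<Longrightarrow> P) \<Longrightarrow> (e \<in> W \<Longrightarrow> P) \<Longrightarrow> (e \<in> outE \<Longrightarrow> P) \<Longrightarrow> P"
  by (auto simp: EE_def C_def)

lemma Ep_indeg_v: "indeg Ep (2*v) = indeg G v"
proof -
  have "{e \<in> edges Ep. tgt Ep e = 2*v} = {e\<in>edges G. tgt G e = v}"
    using inE_EE EE_edges by (auto simp: Ep_simps inE_def)
  then show ?thesis by (simp add: indeg_def)
qed

lemma Ep_outdeg_v: "outdeg Ep (2*v) = outdeg G v"
proof -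
  have "{e \<in> edges Ep. src Ep e = 2*v} = {e\<in>edges G. src G e = v}"
    using outE_EE EE_edges by (auto simp: Ep_simps outE_def)
  then show ?thesis by (simp add: outdeg_def)
qed

lemma Ep_deg_v: "deg Ep (2*v) \<noteq> 1"
  using vint by (simp add: deg_def Ep_indeg_v Ep_outdeg_v)

lemma Ep_indeg_odd: "indeg Ep (2*e+1) = 0"
  by (simp add: indeg_def Ep_simps)

lemma Ep_outdeg_odd: "e \<in> C \<Longrightarrow> outdeg Ep (2*e+1) = 1"
proof -
  assume e: "e \<in> C"
  have "{f \<in> edges Ep. src Ep f = 2*e+1} = {e}"
    using e C_src by (auto simp: Ep_simps EE_def)
  then show ?thesis by (simp add: outdeg_def)
qed

lemma Ep_deg_odd: "e \<in> C \<Longrightarrow> deg Ep (2*e+1) = 1"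
  using Ep_indeg_odd[of e] Ep_outdeg_odd[of e] by (simp add: deg_def)

lemma Ep_indeg_sink: "is_sink G t \<Longrightarrow> indeg Ep (2*t) = 1"
proof -
  assume t: "is_sink G t"
  have "{e \<in> edges Ep. tgt Ep e = 2*t} = {e\<in>edges G. tgt G e = t}"
    using t sink_in_EE EE_edges by (auto simp: Ep_simps)
  then show ?thesis using sink_indeg[OF t] by (simp add: indeg_def)
qed

lemma Ep_outdeg_sink: "is_sink G t \<Longrightarrow> outdeg Ep (2*t) = 0"
proof -
  assume t: "is_sink G t"
  have "{f \<in> edges Ep. src Ep f = 2*t} = {}" using v_not_sink t by (auto simp: Ep_simps)
  then show ?thesis unfolding outdeg_def by (metis card.empty)
qed

lemma Ep_deg_sink: "is_sink G t \<Longrightarrow> deg Ep (2*t) = 1"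
  using Ep_indeg_sink[of t] Ep_outdeg_sink[of t] by (simp add: deg_def)

lemma Ep_prog: "progressive Ep"
proof -
  have "finite (verts Ep)" using finC finV by (auto simp: Ep_simps)
  moreover have "finite (edges Ep)" using finEE by (simp add: Ep_simps)
  moreover have "\<forall>e \<in> edges Ep. src Ep e \<in> verts Ep \<and> tgt Ep e \<in> verts Ep"
  proof
    fix e assume e: "e \<in> edges Ep"
    then have e': "e \<in> EE" by (simp add: Ep_simps)
    have "src Ep e \<in> verts Ep" using EE_C[OF e'] by (auto simp: Ep_simps)
    moreover have "tgt Ep e \<in> verts Ep"
    proof (rule EE_cases[OF e'])
      assume "e \<in> outE"
      then have "is_sink G (tgt G e)" "tgt G e \<in> verts G" using outE_sink tgtV outE_edges by auto
      then show ?thesis by (auto simp: Ep_simps)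
    qed (use tgtV in \<open>auto simp: Ep_simps inE_def W_def\<close>)
    ultimately show "src Ep e \<in> verts Ep \<and> tgt Ep e \<in> verts Ep" by simp
  qed
  moreover have "acyclic {(src Ep e, tgt Ep e) | e. e \<in> edges Ep}"
  proof (rule acyclic_transfer[where G=G and h="\<lambda>y. if even y then y div 2 else src G (y div 2)"])
    show "acyclic {(src G e, tgt G e) |e. e \<in> edges G}" by (rule acyc)
    fix e assume "e \<in> edges Ep"
    then have "e \<in> edges G" using EE_edges by (auto simp: Ep_simps)
    then show "\<exists>e'\<in>edges G. (if even (src Ep e) then src Ep e div 2 else src G (src Ep e div 2)) = src G e' \<and>
              (if even (tgt Ep e) then tgt Ep e div 2 else src G (tgt Ep e div 2)) = tgt G e'"
      by (intro bexI[of _ e]) (auto simp: Ep_simps)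
  qed
  moreover have "deg Ep y = 1" if "is_source Ep y" for y
  proof -
    have y: "y \<in> verts Ep" "indeg Ep y = 0" using that by (auto simp: is_source_def)
    show ?thesis
      by (rule Ep_vertsE[OF y(1)]) (use y Ep_indeg_v v_not_source vV Ep_deg_odd Ep_indeg_sink in
        \<open>auto simp: is_source_def\<close>)
  qed
  moreover have "deg Ep y = 1" if "is_sink Ep y" for y
  proof -
    have y: "y \<in> verts Ep" "outdeg Ep y = 0" using that by (auto simp: is_sink_def)
    show ?thesis
      by (rule Ep_vertsE[OF y(1)]) (use y Ep_outdeg_v v_not_sink vV Ep_deg_odd Ep_deg_sink in
        \<open>auto simp: is_sink_def\<close>)
  qed
  ultimately show ?thesis by (simp add: progressive_def)
qed

lemma Ep_step: "(e,f) \<in> edge_step Ep \<longleftrightarrow> e \<in> inE \<and> f \<in> outE"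
proof
  assume "(e,f) \<in> edge_step Ep"
  then have "e \<in> EE" "f \<in> EE" "2 * tgt G e = (if src G f = v then 2*v else 2*f+1)"
    by (auto simp: edge_step_def Ep_simps)
  then show "e \<in> inE \<and> f \<in> outE" using EE_edges by (auto simp: inE_def outE_def split: if_splits)
next
  assume "e \<in> inE \<and> f \<in> outE"
  then show "(e,f) \<in> edge_step Ep" using inE_EE outE_EE by (auto simp: edge_step_def Ep_simps inE_def outE_def)
qed

lemma Ep_trancl: "(e,f) \<in> (edge_step Ep)\<^sup>+ \<Longrightarrow> e \<in> inE \<and> f \<in> outE"
  by (induction rule: trancl_induct) (auto simp: Ep_step)

lemma Ep_arrow: "arrow Ep e f \<longleftrightarrow> e \<in> inE \<and> f \<in> outE"
  using Ep_trancl Ep_step inE_outE_disj unfolding arrow_def by blast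

lemma Ep_planar: "planar_order Ep"
proof -
  have "ord Ep \<subseteq> edges Ep \<times> edges Ep" by (auto simp: Ep_simps)
  moreover have "irrefl (ord Ep)" using irr by (auto simp: Ep_simps irrefl_def)
  moreover have "trans (ord Ep)" using trs by (auto simp: Ep_simps trans_def)
  moreover have "total_on (edges Ep) (ord Ep)" using tot EE_edges by (auto simp: Ep_simps total_on_def)
  moreover have "\<forall>e1 e2. arrow Ep e1 e2 \<longrightarrow> (e1, e2) \<in> ord Ep"
  proof (intro allI impI)
    fix e1 e2 assume "arrow Ep e1 e2"
    then have a: "e1 \<in> inE" "e2 \<in> outE" by (auto simp: Ep_arrow)
    then have "(e1,e2) \<in> edge_step G" by (auto simp: edge_step_def inE_def outE_def)
    then have "arrow G e1 e2" using a inE_outE_disj unfolding arrow_def by blast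
    then show "(e1, e2) \<in> ord Ep" using P1 a inE_EE outE_EE by (auto simp: Ep_simps)
  qed
  moreover have "\<forall>e1 e2 e3. (e1, e2) \<in> ord Ep \<longrightarrow> (e2, e3) \<in> ord Ep \<longrightarrow> arrow Ep e1 e3 \<longrightarrow>
        arrow Ep e1 e2 \<or> arrow Ep e2 e3"
  proof (intro allI impI)
    fix e1 e2 e3 assume a: "(e1, e2) \<in> ord Ep" "(e2, e3) \<in> ord Ep" "arrow Ep e1 e3"
    then have e13: "e1 \<in> inE" "e3 \<in> outE" by (auto simp: Ep_arrow)
    have e2: "e2 \<in> EE" using a by (auto simp: Ep_simps)
    show "arrow Ep e1 e2 \<or> arrow Ep e2 e3"
    proof (rule EE_cases[OF e2])
      assume "e2 \<in> inE" then show ?thesis using e13 by (simp add: Ep_arrow)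
    next
      assume "e2 \<in> outE" then show ?thesis using e13 by (simp add: Ep_arrow)
    next
      assume w: "e2 \<in> W"
      have "(e1,e3) \<in> edge_step G" using e13 by (auto simp: edge_step_def inE_def outE_def)
      then have "arrow G e1 e3" using e13 inE_outE_disj unfolding arrow_def by blast
      then have "arrow G e1 e2 \<or> arrow G e2 e3" using P2 a by (auto simp: Ep_simps)
      then show ?thesis
      proof
        assume "arrow G e1 e2"
        then have "e2 \<in> outE" using F3 e13 by (auto simp: arrow_def)
        then show ?thesis using w C_outE by (auto simp: C_def)
      next
        assume "arrow G e2 e3"
        then obtain z where "(e2,z) \<in> edge_step G" by (auto simp: arrow_def dest: tranclD)
        then show ?thesis using W_no_succ w by blast
      qed
    qed
  qed
  ultimately show ?thesis by (simp add: planar_order_def)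
qed

lemma Ep_pop: "pop_graph Ep" using Ep_prog Ep_planar by (simp add: pop_graph_def)

lemma Ep_internal: "y \<in> verts Ep \<Longrightarrow> deg Ep y \<noteq> 1 \<Longrightarrow> y = 2*v"
  by (erule Ep_vertsE) (use Ep_deg_odd Ep_deg_sink in auto)

lemma Ep_elem: "elementary_pop Ep"
  using Ep_pop Ep_internal by (auto simp: elementary_pop_def elementary_def internal_def)

lemma Ep_inputs: "input_edges Ep = C"
proof -
  have "e \<in> input_edges Ep \<longleftrightarrow> e \<in> C" for e
  proof (cases "e \<in> EE")
    case True
    show ?thesis
    proof (cases "src G e = v")
      case True
      then have "e \<notin> C" using C_src by blast
      then show ?thesis using True Ep_deg_v by (auto simp: input_edges_def boundary_def Ep_simps)
    next
      case False
      then have "e \<in> C" using EE_C \<open>e \<in> EE\<close> by blast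
      then show ?thesis using False Ep_deg_odd \<open>e \<in> EE\<close> by (auto simp: input_edges_def boundary_def Ep_simps)
    qed
  next
    case False then show ?thesis by (auto simp: input_edges_def Ep_simps EE_def)
  qed
  then show ?thesis by blast
qed

end


lemma pop_comp_simps:
  "verts (pop_comp G1 G2) = Inl ` {v \<in> verts G1. \<not> is_sink G1 v} \<union> Inr ` {v \<in> verts G2. \<not> is_source G2 v}"
  "edges (pop_comp G1 G2) = Inl ` edges G1 \<union> Inr ` (edges G2 - input_edges G2)"
  "src (pop_comp G1 G2) (Inl e) = Inl (src G1 e)"
  "src (pop_comp G1 G2) (Inr e) = Inr (src G2 e)"
  "tgt (pop_comp G1 G2) (Inl e) = (if e \<in> output_edges G1 then Inr (tgt G2 (matched_input G1 G2 e))
                           else Inl (tgt G1 e))"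
  "tgt (pop_comp G1 G2) (Inr e) = Inr (tgt G2 e)"
  by (simp_all add: pop_comp_def)

lemma pop_comp_ord_LL: "(Inl a, Inl b) \<in> ord (pop_comp G1 G2) \<longleftrightarrow> (a,b) \<in> ord G1"
  by (auto simp: pop_comp_def)
lemma pop_comp_ord_RR: "(Inr a, Inr b) \<in> ord (pop_comp G1 G2) \<longleftrightarrow>
   a \<in> edges G2 - input_edges G2 \<and> b \<in> edges G2 - input_edges G2 \<and> (a,b) \<in> ord G2"
  by (auto simp: pop_comp_def)
lemma pop_comp_ord_LR: "(Inl a, Inr b) \<in> ord (pop_comp G1 G2) \<longleftrightarrow>
   a \<in> edges G1 \<and> b \<in> edges G2 - input_edges G2 \<and> outs_before G1 a < ins_before G2 b"
  by (auto simp: pop_comp_def)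
lemma pop_comp_ord_RL: "(Inr b, Inl a) \<in> ord (pop_comp G1 G2) \<longleftrightarrow>
   a \<in> edges G1 \<and> b \<in> edges G2 - input_edges G2 \<and> ins_before G2 b \<le> outs_before G1 a"
  by (auto simp: pop_comp_def)

context step begin

definition "cnt a = card {u \<in> C. (u,a) \<in> ord G}"

lemma outs_Gp: "a \<in> E' \<Longrightarrow> outs_before Gp a = cnt a"
proof -
  assume a: "a \<in> E'"
  have "{u \<in> output_edges Gp. (u, a) \<in> ord Gp} = {u \<in> C. (u,a) \<in> ord G}"
    using a C_E' by (auto simp: Gp_outputs Gp_simps)
  then show ?thesis by (simp add: outs_before_def cnt_def)
qed

lemma ins_Ep: "b \<in> EE \<Longrightarrow> ins_before Ep b = cnt b"
proof -
  assume b: "b \<in> EE"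
  have "{u \<in> input_edges Ep. (u, b) \<in> ord Ep} = {u \<in> C. (u,b) \<in> ord G}"
    using b by (auto simp: Ep_inputs Ep_simps EE_def)
  then show ?thesis by (simp add: ins_before_def cnt_def)
qed

lemma K1: "(a,b) \<in> ord G \<Longrightarrow> cnt a \<le> cnt b"
  unfolding cnt_def by (rule card_mono) (use finC trs in auto)

lemma K2: assumes "u \<in> C" "u = a \<or> (a,u) \<in> ord G" "(u,b) \<in> ord G" shows "cnt a < cnt b"
proof -
  have sub: "{u \<in> C. (u,a) \<in> ord G} \<subseteq> {u \<in> C. (u,b) \<in> ord G}"
  proof
    fix x assume x: "x \<in> {u \<in> C. (u,a) \<in> ord G}"
    have "(a,b) \<in> ord G" using assms trs by auto
    then show "x \<in> {u \<in> C. (u,b) \<in> ord G}" using x trs by auto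
  qed
  have "u \<notin> {u \<in> C. (u,a) \<in> ord G}" using assms(2) irr trs by blast
  then have "{u \<in> C. (u,a) \<in> ord G} \<subset> {u \<in> C. (u,b) \<in> ord G}" using sub assms by blast
  then show ?thesis unfolding cnt_def by (rule psubset_card_mono[rotated]) (use finC in auto)
qed

lemma K3:
  assumes a: "a \<in> E'" and b: "b \<in> outE" and ab: "(a,b) \<in> ord G"
  shows "\<exists>u\<in>C. (u = a \<or> (a,u) \<in> ord G) \<and> (u,b) \<in> ord G"
proof (cases "a \<in> C")
  case True then show ?thesis using ab by blast
next
  case False
  obtain i where i: "i \<in> inE" using inE_ne by blast
  have "(i,b) \<in> edge_step G" using i b by (auto simp: edge_step_def inE_def outE_def)
  then have "arrow G i b" using i b inE_outE_disj unfolding arrow_def by blast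
  then have ib: "(i,b) \<in> ord G" by (rule P1)
  show ?thesis
  proof (cases "(a,i) \<in> ord G")
    case True then show ?thesis using i ib inE_C by blast
  next
    case False
    have "a \<noteq> i" using \<open>a \<notin> C\<close> i inE_C by blast
    then have ia: "(i,a) \<in> ord G" using False tot a i by (auto simp: E'_def inE_def)
    have "arrow G i a \<or> arrow G a b" using P2[OF ia ab \<open>arrow G i b\<close>] .
    then show ?thesis
    proof
      assume "arrow G i a"
      then have "a \<in> outE" using F3 i by (auto simp: arrow_def)
      then show ?thesis using a by (auto simp: E'_def)
    next
      assume "arrow G a b"
      then obtain c where c: "(a,c) \<in> (edge_step G)\<^sup>*" "(c,b) \<in> edge_step G"
        by (auto simp: arrow_def dest: tranclD2)
      then have cI: "c \<in> inE" using b by (auto simp: edge_step_def inE_def outE_def)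
      then have "a \<noteq> c" using \<open>a \<notin> C\<close> inE_C by blast
      then have "(a,c) \<in> (edge_step G)\<^sup>+" using c(1) by (auto simp: rtrancl_eq_or_trancl)
      then have "(a,c) \<in> ord G" using P1 \<open>a \<noteq> c\<close> by (auto simp: arrow_def)
      moreover have "(c,b) \<in> ord G" using P1 c(2) cI b inE_outE_disj
        by (metis arrow_def r_into_trancl')
      ultimately show ?thesis using cI inE_C by blast
    qed
  qed
qed

lemma KEY: "a \<in> E' \<Longrightarrow> b \<in> outE \<Longrightarrow> (a,b) \<in> ord G \<longleftrightarrow> cnt a < cnt b"
proof
  assume "a \<in> E'" "b \<in> outE" "(a,b) \<in> ord G"
  then show "cnt a < cnt b" using K3 K2 by blast
next
  assume a: "a \<in> E'" "b \<in> outE" "cnt a < cnt b"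
  show "(a,b) \<in> ord G"
  proof (rule ccontr)
    assume "(a,b) \<notin> ord G"
    moreover have "a \<noteq> b" using a by (auto simp: E'_def)
    ultimately have "(b,a) \<in> ord G" using tot a outE_edges by (auto simp: E'_def)
    then show False using K1 a by fastforce
  qed
qed

lemma KEY2: "a \<in> E' \<Longrightarrow> b \<in> outE \<Longrightarrow> (b,a) \<in> ord G \<longleftrightarrow> cnt b \<le> cnt a"
proof
  assume "(b,a) \<in> ord G" then show "cnt b \<le> cnt a" by (rule K1)
next
  assume a: "a \<in> E'" "b \<in> outE" "cnt b \<le> cnt a"
  show "(b,a) \<in> ord G"
  proof (rule ccontr)
    assume "(b,a) \<notin> ord G"
    moreover have "a \<noteq> b" using a by (auto simp: E'_def)
    ultimately have "(a,b) \<in> ord G" using tot a outE_edges by (auto simp: E'_def)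
    then show False using KEY a by fastforce
  qed
qed

lemma cnt_inj: "i \<in> C \<Longrightarrow> u \<in> C \<Longrightarrow> cnt i = cnt u \<Longrightarrow> i = u"
proof (rule ccontr)
  assume a: "i \<in> C" "u \<in> C" "cnt i = cnt u" "i \<noteq> u"
  then have "(i,u) \<in> ord G \<or> (u,i) \<in> ord G" using tot C_edges by auto
  then show False
  proof
    assume "(i,u) \<in> ord G" then have "cnt i < cnt u" using K2[of i i u] a by auto
    then show False using a by simp
  next
    assume "(u,i) \<in> ord G" then have "cnt u < cnt i" using K2[of u u i] a by auto
    then show False using a by simp
  qed
qed

lemma matched: "u \<in> C \<Longrightarrow> matched_input Gp Ep u = u"
  unfolding matched_input_def
proof (rule the_equality)
  assume u: "u \<in> C"
  show "u \<in> input_edges Ep \<and> ins_before Ep u = outs_before Gp u"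
    using u ins_Ep outs_Gp C_E' by (auto simp: Ep_inputs EE_def)
  fix i assume "i \<in> input_edges Ep \<and> ins_before Ep i = outs_before Gp u"
  then have "i \<in> C" "cnt i = cnt u" using u ins_Ep outs_Gp C_E' by (auto simp: Ep_inputs EE_def)
  then show "i = u" using cnt_inj u by blast
qed

lemma nonsink_Gp: "{y \<in> verts Gp. \<not> is_sink Gp y} = (\<lambda>x. 2*x) ` {x \<in> verts G. x \<noteq> v \<and> \<not> is_sink G x}"
proof
  show "{y \<in> verts Gp. \<not> is_sink Gp y} \<subseteq> (\<lambda>x. 2*x) ` {x \<in> verts G. x \<noteq> v \<and> \<not> is_sink G x}"
  proof
    fix y assume y: "y \<in> {y \<in> verts Gp. \<not> is_sink Gp y}"
    show "y \<in> (\<lambda>x. 2*x) ` {x \<in> verts G. x \<noteq> v \<and> \<not> is_sink G x}"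
    proof (rule Gp_vertsE[of y])
      fix x assume "x \<in> kept" "y = 2*x"
      then show ?thesis using y Gp_outdeg_kept kept_sub by (auto simp: is_sink_def)
    next
      fix e assume "e \<in> inE" "y = 2*e+1" then show ?thesis using y Gp_outdeg_new by (auto simp: is_sink_def)
    qed (use y in auto)
  qed
  show "(\<lambda>x. 2*x) ` {x \<in> verts G. x \<noteq> v \<and> \<not> is_sink G x} \<subseteq> {y \<in> verts Gp. \<not> is_sink Gp y}"
  proof
    fix y assume "y \<in> (\<lambda>x. 2*x) ` {x \<in> verts G. x \<noteq> v \<and> \<not> is_sink G x}"
    then obtain x where x: "y = 2*x" "x \<in> verts G" "x \<noteq> v" "\<not> is_sink G x" by auto
    have "x \<notin> tgt G ` outE" using x outE_sink by auto
    then have "x \<in> kept" using x by (auto simp: kept_def)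
    then show "y \<in> {y \<in> verts Gp. \<not> is_sink Gp y}" using x Gp_outdeg_kept
      by (auto simp: Gp_simps is_sink_def)
  qed
qed

lemma nonsource_Ep: "{y \<in> verts Ep. \<not> is_source Ep y} = {2*v} \<union> (\<lambda>t. 2*t) ` {t \<in> verts G. is_sink G t}"
proof
  show "{y \<in> verts Ep. \<not> is_source Ep y} \<subseteq> {2*v} \<union> (\<lambda>t. 2*t) ` {t \<in> verts G. is_sink G t}"
  proof
    fix y assume y: "y \<in> {y \<in> verts Ep. \<not> is_source Ep y}"
    show "y \<in> {2*v} \<union> (\<lambda>t. 2*t) ` {t \<in> verts G. is_sink G t}"
      by (rule Ep_vertsE[of y]) (use y Ep_indeg_odd in \<open>auto simp: is_source_def\<close>)
  qed
  show "{2*v} \<union> (\<lambda>t. 2*t) ` {t \<in> verts G. is_sink G t} \<subseteq> {y \<in> verts Ep. \<not> is_source Ep y}"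
    using Ep_indeg_v Ep_indeg_sink v_not_source vV by (auto simp: is_source_def Ep_simps)
qed

abbreviation "K \<equiv> pop_comp Gp Ep"

lemma K_verts: "verts K = Inl ` (\<lambda>x. 2*x) ` {x \<in> verts G. x \<noteq> v \<and> \<not> is_sink G x}
   \<union> Inr ` ({2*v} \<union> (\<lambda>t. 2*t) ` {t \<in> verts G. is_sink G t})"
  by (simp add: pop_comp_simps nonsink_Gp nonsource_Ep)

lemma K_edges: "edges K = Inl ` E' \<union> Inr ` outE"
  by (simp add: pop_comp_simps Ep_inputs EE_minus Gp_simps Ep_simps)

definition fv :: "nat + nat \<Rightarrow> nat" where "fv z = (case z of Inl y \<Rightarrow> y div 2 | Inr y \<Rightarrow> y div 2)"
definition ge :: "nat + nat \<Rightarrow> nat" where "ge z = (case z of Inl y \<Rightarrow> y | Inr y \<Rightarrow> y)"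

lemma fv_bij: "bij_betw fv (verts K) (verts G)"
proof -
  have "inj_on fv (verts K)"
    unfolding K_verts inj_on_def fv_def using v_not_sink by auto
  moreover have "fv ` verts K \<subseteq> verts G"
    unfolding K_verts fv_def using vV by auto
  moreover have "verts G \<subseteq> fv ` verts K"
  proof
    fix x assume x: "x \<in> verts G"
    consider "x = v" | "x \<noteq> v" "\<not> is_sink G x" | "is_sink G x" by blast
    then show "x \<in> fv ` verts K"
    proof cases
      case 1 then have "Inr (2*x) \<in> verts K" unfolding K_verts by auto
      then show ?thesis by (rule image_eqI[rotated]) (simp add: fv_def)
    next
      case 2 then have "Inl (2*x) \<in> verts K" unfolding K_verts using x by auto
      then show ?thesis by (rule image_eqI[rotated]) (simp add: fv_def)
    next
      case 3 then have "Inr (2*x) \<in> verts K" unfolding K_verts using x by auto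
      then show ?thesis by (rule image_eqI[rotated]) (simp add: fv_def)
    qed
  qed
  ultimately show ?thesis by (simp add: bij_betw_def subset_antisym)
qed

lemma ge_bij: "bij_betw ge (edges K) (edges G)"
proof -
  have "inj_on ge (edges K)"
    unfolding K_edges inj_on_def ge_def by (auto simp: E'_def)
  moreover have "ge ` edges K \<subseteq> edges G"
    unfolding K_edges ge_def E'_def using outE_edges by auto
  moreover have "edges G \<subseteq> ge ` edges K"
  proof
    fix x assume "x \<in> edges G"
    then consider "x \<in> E'" | "x \<in> outE" using edges_split by blast
    then show "x \<in> ge ` edges K"
    proof cases
      case 1 then have "Inl x \<in> edges K" unfolding K_edges by auto
      then show ?thesis by (rule image_eqI[rotated]) (simp add: ge_def)
    next
      case 2 then have "Inr x \<in> edges K" unfolding K_edges by auto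
      then show ?thesis by (rule image_eqI[rotated]) (simp add: ge_def)
    qed
  qed
  ultimately show ?thesis by (simp add: bij_betw_def subset_antisym)
qed

lemma K_st: "\<forall>e\<in>edges K. src G (ge e) = fv (src K e) \<and> tgt G (ge e) = fv (tgt K e)"
proof
  fix z assume "z \<in> edges K"
  then consider (L) a where "z = Inl a" "a \<in> E'" | (R) b where "z = Inr b" "b \<in> outE"
    unfolding K_edges by blast
  then show "src G (ge z) = fv (src K z) \<and> tgt G (ge z) = fv (tgt K z)"
  proof cases
    case L
    have "tgt G a = fv (tgt K z)"
    proof (cases "a \<in> C")
      case True then show ?thesis using L matched by (simp add: pop_comp_simps Gp_outputs Ep_simps fv_def)
    next
      case False
      then have "tgt G a \<noteq> v" using L inE_C by (auto simp: inE_def E'_def)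
      then show ?thesis using L False by (simp add: pop_comp_simps Gp_outputs Gp_simps fv_def)
    qed
    then show ?thesis using L by (simp add: pop_comp_simps Gp_simps fv_def ge_def)
  next
    case R
    then show ?thesis by (simp add: pop_comp_simps Ep_simps fv_def ge_def outE_def)
  qed
qed

lemma K_ord: "\<forall>e\<in>edges K. \<forall>e'\<in>edges K. (e,e')\<in>ord K \<longleftrightarrow> (ge e, ge e')\<in>ord G"
proof (intro ballI)
  fix z z' assume z: "z \<in> edges K" and z': "z' \<in> edges K"
  have ed: "edges Gp = E'" "edges Ep - input_edges Ep = outE"
    by (simp_all add: Gp_simps Ep_simps Ep_inputs EE_minus)
  from z consider (L) a where "z = Inl a" "a \<in> E'" | (R) b where "z = Inr b" "b \<in> outE"
    unfolding K_edges by blast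
  then show "(z,z')\<in>ord K \<longleftrightarrow> (ge z, ge z')\<in>ord G"
  proof cases
    case L
    from z' consider (L') a' where "z' = Inl a'" "a' \<in> E'" | (R') b' where "z' = Inr b'" "b' \<in> outE"
      unfolding K_edges by blast
    then show ?thesis
    proof cases
      case L' then show ?thesis using L by (simp add: pop_comp_ord_LL Gp_simps ge_def)
    next
      case R' then show ?thesis using L KEY[of a b'] outs_Gp ins_Ep outE_EE
        by (auto simp: pop_comp_ord_LR ed ge_def)
    qed
  next
    case R
    from z' consider (L') a' where "z' = Inl a'" "a' \<in> E'" | (R') b' where "z' = Inr b'" "b' \<in> outE"
      unfolding K_edges by blast
    then show ?thesis
    proof cases
      case L' then show ?thesis using R KEY2[of a' b] outs_Gp ins_Ep outE_EE
        by (auto simp: pop_comp_ord_RL ed ge_def)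
    next
      case R' then show ?thesis using R outE_EE C_outE by (auto simp: pop_comp_ord_RR ed ge_def Ep_simps Ep_inputs)
    qed
  qed
qed

lemma K_iso: "pop_iso K G"
  unfolding pop_iso_def using fv_bij ge_bij K_st K_ord by blast

lemma composable_GpEp: "composable Gp Ep"
  using Gp_pop Ep_pop by (simp add: composable_def Gp_outputs Ep_inputs)

end


lemma exists_max:
  assumes pop: "pop_graph G" and w: "w \<in> verts G" "deg G w \<noteq> 1"
  shows "\<exists>v. v \<in> verts G \<and> deg G v \<noteq> 1 \<and> (\<forall>e. e \<in> edges G \<longrightarrow> src G e = v \<longrightarrow> is_sink G (tgt G e))"
proof -
  have prog: "progressive G" using pop by (simp add: pop_graph_def)
  define I where "I = {x \<in> verts G. deg G x \<noteq> 1}"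
  define R where "R = {(src G e, tgt G e) | e. e \<in> edges G}"
  define S where "S = {(x,y). x \<in> I \<and> y \<in> I \<and> (x,y) \<in> R}"
  have "finite I" using prog by (simp add: I_def progressive_def)
  moreover have "S \<subseteq> I \<times> I" by (auto simp: S_def)
  ultimately have fS: "finite S" using finite_subset by blast
  have "acyclic R" using prog by (simp add: R_def progressive_def)
  then have aS: "acyclic S" by (rule acyclic_subset) (auto simp: S_def)
  have "wf (S\<inverse>)" by (rule finite_acyclic_wf_converse[OF fS aS])
  moreover have "w \<in> I" using w by (simp add: I_def)
  ultimately have "\<exists>z\<in>I. \<forall>y. (y,z) \<in> S\<inverse> \<longrightarrow> y \<notin> I"
    unfolding wf_eq_minimal by blast
  then obtain v where v: "v \<in> I" "\<forall>y. (y,v) \<in> S\<inverse> \<longrightarrow> y \<notin> I" by blast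
  have "is_sink G (tgt G e)" if e: "e \<in> edges G" "src G e = v" for e
  proof -
    have t: "tgt G e \<in> verts G" using prog e by (simp add: progressive_def)
    have "(v, tgt G e) \<in> R" using e R_def by blast
    then have "tgt G e \<notin> I"
    proof (intro notI)
      assume "(v, tgt G e) \<in> R" "tgt G e \<in> I"
      then have "(tgt G e, v) \<in> S\<inverse>" using v(1) by (simp add: S_def)
      then show False using v(2) \<open>tgt G e \<in> I\<close> by blast
    qed
    then have "deg G (tgt G e) = 1" using t by (simp add: I_def)
    moreover have "indeg G (tgt G e) \<noteq> 0" using prog e unfolding indeg_def progressive_def by auto
    ultimately show ?thesis using t by (auto simp: deg_def is_sink_def)
  qed
  then show ?thesis using v by (auto simp: I_def)
qed

lemma main:
  "\<forall>G :: (nat,nat) pgraph. pop_graph G \<longrightarrow> card {x \<in> verts G. deg G x \<noteq> 1} = n \<longrightarrow>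
    (\<exists>Gs Hs. Gs \<noteq> [] \<and> (\<forall>H\<in>set Gs. elementary_pop H) \<and> length Hs = length Gs \<and> Hs!0 = Gs!0 \<and>
      (\<forall>k. 0 < k \<and> k < length Gs \<longrightarrow> composable (Hs!(k-1)) (Gs!k) \<and>
           pop_iso (pop_comp (Hs!(k-1)) (Gs!k)) (Hs!k)) \<and> last Hs = G)"
proof (induction n)
  case 0
  show ?case
  proof (intro allI impI)
    fix G :: "(nat,nat) pgraph" assume pop: "pop_graph G" and c: "card {x \<in> verts G. deg G x \<noteq> 1} = 0"
    have "finite (verts G)" using pop by (simp add: pop_graph_def progressive_def)
    then have "{x \<in> verts G. deg G x \<noteq> 1} = {}" using c by simp
    then have "elementary_pop G" using pop by (auto simp: elementary_pop_def elementary_def internal_def)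
    then show "\<exists>Gs Hs. Gs \<noteq> [] \<and> (\<forall>H\<in>set Gs. elementary_pop H) \<and> length Hs = length Gs \<and> Hs!0 = Gs!0 \<and>
      (\<forall>k. 0 < k \<and> k < length Gs \<longrightarrow> composable (Hs!(k-1)) (Gs!k) \<and>
           pop_iso (pop_comp (Hs!(k-1)) (Gs!k)) (Hs!k)) \<and> last Hs = G"
      by (intro exI[of _ "[G]"]) auto
  qed
next
  case (Suc n)
  show ?case
  proof (intro allI impI)
    fix G :: "(nat,nat) pgraph" assume pop: "pop_graph G" and c: "card {x \<in> verts G. deg G x \<noteq> 1} = Suc n"
    then obtain w where "w \<in> verts G" "deg G w \<noteq> 1" by (metis (mono_tags, lifting) card.empty empty_Collect_eq nat.simps(3))
    then obtain v where v: "v \<in> verts G" "deg G v \<noteq> 1" "\<And>e. e \<in> edges G \<Longrightarrow> src G e = v \<Longrightarrow> is_sink G (tgt G e)"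
      using exists_max[OF pop] by blast
    interpret st: step G v using pop v by unfold_locales auto
    have "card {y \<in> verts st.Gp. deg st.Gp y \<noteq> 1} = n" using st.Gp_internal_card c by simp
    then obtain Gs Hs where IH: "Gs \<noteq> []" "\<forall>H\<in>set Gs. elementary_pop H" "length Hs = length Gs" "Hs!0 = Gs!0"
      "\<forall>k. 0 < k \<and> k < length Gs \<longrightarrow> composable (Hs!(k-1)) (Gs!k) \<and>
           pop_iso (pop_comp (Hs!(k-1)) (Gs!k)) (Hs!k)" "last Hs = st.Gp"
      using Suc.IH st.Gp_pop by blast
    have Hne: "Hs \<noteq> []" using IH(1,3) by auto
    have lastH: "Hs ! (length Gs - 1) = st.Gp" using IH(3,6) Hne by (simp add: last_conv_nth)
    show "\<exists>Gs Hs. Gs \<noteq> [] \<and> (\<forall>H\<in>set Gs. elementary_pop H) \<and> length Hs = length Gs \<and> Hs!0 = Gs!0 \<and>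
      (\<forall>k. 0 < k \<and> k < length Gs \<longrightarrow> composable (Hs!(k-1)) (Gs!k) \<and>
           pop_iso (pop_comp (Hs!(k-1)) (Gs!k)) (Hs!k)) \<and> last Hs = G"
    proof (intro exI conjI)
      show "Gs @ [st.Ep] \<noteq> []" by simp
      show "\<forall>H\<in>set (Gs @ [st.Ep]). elementary_pop H" using IH(2) st.Ep_elem by auto
      show "length (Hs @ [G]) = length (Gs @ [st.Ep])" using IH(3) by simp
      show "(Hs @ [G]) ! 0 = (Gs @ [st.Ep]) ! 0" using IH(1,3,4) Hne by (simp add: nth_append)
      show "last (Hs @ [G]) = G" by simp
      show "\<forall>k. 0 < k \<and> k < length (Gs @ [st.Ep]) \<longrightarrow>
          composable ((Hs @ [G]) ! (k - 1)) ((Gs @ [st.Ep]) ! k) \<and>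
          pop_iso (pop_comp ((Hs @ [G]) ! (k - 1)) ((Gs @ [st.Ep]) ! k)) ((Hs @ [G]) ! k)"
      proof (intro allI impI)
        fix k assume k: "0 < k \<and> k < length (Gs @ [st.Ep])"
        show "composable ((Hs @ [G]) ! (k - 1)) ((Gs @ [st.Ep]) ! k) \<and>
          pop_iso (pop_comp ((Hs @ [G]) ! (k - 1)) ((Gs @ [st.Ep]) ! k)) ((Hs @ [G]) ! k)"
        proof (cases "k < length Gs")
          case True
          moreover have "k - 1 < length Gs" using True by simp
          ultimately show ?thesis using IH(3,5) k by (simp add: nth_append)
        next
          case False
          then have "k = length Gs" using k by simp
          then show ?thesis using IH(3) lastH IH(1) st.composable_GpEp st.K_iso
            by (simp add: nth_append)
        qed
      qed
    qed
  qed
qed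

theorem proposition2p11:
  fixes G :: "('v, 'e) pgraph"
  assumes "pop_graph G"
  shows "\<exists>Gs :: (nat, nat) pgraph list.
           (\<forall>H \<in> set Gs. elementary_pop H) \<and> is_composite_of Gs G"
proof -
  obtain H :: "(nat,nat) pgraph" where H: "pop_graph H" "pop_iso H G"
    using rename_exists[OF assms] by blast
  then obtain Gs Hs where M: "Gs \<noteq> []" "\<forall>H\<in>set Gs. elementary_pop H" "length Hs = length Gs" "Hs!0 = Gs!0"
      "\<forall>k. 0 < k \<and> k < length Gs \<longrightarrow> composable (Hs!(k-1)) (Gs!k) \<and>
           pop_iso (pop_comp (Hs!(k-1)) (Gs!k)) (Hs!k)" "last Hs = H"
    using main by blast
  have "is_composite_of Gs G" unfolding is_composite_of_def using M H(2) by blast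
  then show ?thesis using M(2) by blast
qed


end
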